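(* For $M\in\Lambda$, the following are equivalent: (1) $M$ is in $\mathsf v$-normal form; (2) every $t\in\mathcal T(M)$ is in $\beta_r\sigma$-normal form, i.e. contains no subterm that is a $\beta_r$-, $\sigma_1$- or $\sigma_3$-redex.
   Context: $\lambda$-terms and values are $M,N::=V\mid MN$, $V::=x\mid\lambda x.M$, up to $\alpha$-conversion. Rules: $(\beta_v)$ $(\lambda x.M)V\to M\{x:=V\}$ if $V$ is a value; $(\sigma_1)$ $(\lambda x.M)NP\to(\lambda x.MP)N$ if $x\notin\mathrm{FV}(P)$; $(\sigma_3)$ $V((\lambda x.M)N)\to(\lambda x.VM)N$ if $V$ is a value and $x\notin\mathrm{FV}(V)$. $M$ is in $\mathsf v$-normal form if it contains no redex of these three kinds. Resource calculus: resource values $v::=x\mid\lambda x.t$; simple terms $s,t::=st\mid[v_1,\dots,v_k]$ ($k\ge0$, bags are finite multisets); $[x^n]$ is the bag of $n$ copies of $x$. Redexes: a $\beta_r$-redex is $[\lambda x.t][v_1,\dots,v_n]$; a $\sigma_1$-redex is $[\lambda x.t]s_1s_2$ (with $x\notin\mathrm{FV}(s_1)$ after renaming); a $\sigma_3$-redex is $[v]([\lambda x.t]s)$ with $v$ a resource value (with $x\notin\mathrm{FV}(v)$ after renaming). Taylor expansion: $\mathcal T(x)=\{[x^n]\mid n\ge0\}$, $\mathcal T(\lambda x.N)=\{[\lambda x.t_1,\dots,\lambda x.t_n]\mid n\ge0,\ t_i\in\mathcal T(N)\}$, $\mathcal T(PQ)=\{st\mid s\in\mathcal T(P),t\in\mathcal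 T(Q)\}$. *)

theory Defs
  imports Main "HOL-Library.Multiset"
begin

datatype lterm = Var nat | Lam lterm | App lterm lterm

fun is_value :: "lterm \<Rightarrow> bool" where
  "is_value (Var _) = True"
| "is_value (Lam _) = True"
| "is_value (App _ _) = False"

inductive lsub :: "lterm \<Rightarrow> lterm \<Rightarrow> bool" where
  lsub_refl: "lsub M M"
| lsub_lam: "lsub N M \<Longrightarrow> lsub N (Lam M)"
| lsub_app1: "lsub N M \<Longrightarrow> lsub N (App M P)"
| lsub_app2: "lsub N P \<Longrightarrow> lsub N (App M P)"

text \<open>Redexes. The freshness side conditions of sigma1/sigma3 can always be
  met by alpha-renaming, so on alpha-classes only the shape matters.\<close>
definition beta_v_redex :: "lterm \<Rightarrow> bool" where
  "beta_v_redex R \<longleftrightarrow> (\<exists>M V. R = App (Lam M) V \<and> is_value V)"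

definition sigma1_redex :: "lterm \<Rightarrow> bool" where
  "sigma1_redex R \<longleftrightarrow> (\<exists>M N P. R = App (App (Lam M) N) P)"

definition sigma3_redex :: "lterm \<Rightarrow> bool" where
  "sigma3_redex R \<longleftrightarrow> (\<exists>V M N. R = App V (App (Lam M) N) \<and> is_value V)"

definition v_normal :: "lterm \<Rightarrow> bool" where
  "v_normal M \<longleftrightarrow>
     (\<forall>R. lsub R M \<longrightarrow> \<not> beta_v_redex R \<and> \<not> sigma1_redex R \<and> \<not> sigma3_redex R)"

datatype rterm = RApp rterm rterm | Bag "rval multiset"
     and rval = RVar nat | RLam rterm

inductive rsub :: "rterm \<Rightarrow> rterm \<Rightarrow> bool" where
  rsub_refl: "rsub s s"
| rsub_app1: "rsub s s1 \<Longrightarrow> rsub s (RApp s1 s2)"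
| rsub_app2: "rsub s s2 \<Longrightarrow> rsub s (RApp s1 s2)"
| rsub_bag: "RLam t \<in># b \<Longrightarrow> rsub s t \<Longrightarrow> rsub s (Bag b)"

definition beta_r_redex :: "rterm \<Rightarrow> bool" where
  "beta_r_redex r \<longleftrightarrow> (\<exists>t b. r = RApp (Bag {#RLam t#}) (Bag b))"

definition rsigma1_redex :: "rterm \<Rightarrow> bool" where
  "rsigma1_redex r \<longleftrightarrow> (\<exists>t s1 s2. r = RApp (RApp (Bag {#RLam t#}) s1) s2)"

definition rsigma3_redex :: "rterm \<Rightarrow> bool" where
  "rsigma3_redex r \<longleftrightarrow> (\<exists>v t s. r = RApp (Bag {#v#}) (RApp (Bag {#RLam t#}) s))"

definition beta_r_sigma_normal :: "rterm \<Rightarrow> bool" where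
  "beta_r_sigma_normal s \<longleftrightarrow>
     (\<forall>r. rsub r s \<longrightarrow> \<not> beta_r_redex r \<and> \<not> rsigma1_redex r \<and> \<not> rsigma3_redex r)"

fun taylor :: "lterm \<Rightarrow> rterm set" where
  "taylor (Var x) = {Bag (replicate_mset n (RVar x)) | n. True}"
| "taylor (Lam N) = {Bag (mset (map RLam ts)) | ts. set ts \<subseteq> taylor N}"
| "taylor (App P Q) = {RApp s t | s t. s \<in> taylor P \<and> t \<in> taylor Q}"

end

theory Submission
  imports Defs
begin

lemma lam_mem: "set ts \<subseteq> taylor N \<Longrightarrow> Bag (mset (map RLam ts)) \<in> taylor (Lam N)"
  by auto

lemma var_mem: "Bag (replicate_mset n (RVar x)) \<in> taylor (Var x)"
  by auto

lemma taylor_nonempty: "\<exists>t. t \<in> taylor M"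
proof (induction M)
  case (Var x) then show ?case by auto
next
  case (Lam M) show ?case by (rule exI[of _ "Bag (mset (map RLam []))"]) auto
next
  case (App P Q) then show ?case by auto
qed

lemma taylor_RApp: "RApp s1 s2 \<in> taylor M \<Longrightarrow> \<exists>P Q. M = App P Q \<and> s1 \<in> taylor P \<and> s2 \<in> taylor Q"
  by (cases M) auto

lemma taylor_Bag_value: "Bag b \<in> taylor M \<Longrightarrow> is_value M"
  by (cases M) auto

lemma taylor_Bag_lam: "Bag b \<in> taylor M \<Longrightarrow> RLam t \<in># b \<Longrightarrow> \<exists>N. M = Lam N \<and> t \<in> taylor N"
proof (cases M)
  case (Var x)
  assume "Bag b \<in> taylor M" "RLam t \<in># b"
  then show ?thesis using Var by (auto split: if_splits)
next
  case (Lam N)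
  assume "Bag b \<in> taylor M" "RLam t \<in># b"
  then show ?thesis using Lam by auto
next
  case (App P Q)
  assume "Bag b \<in> taylor M" then show ?thesis using App by auto
qed

lemma down: "rsub r t \<Longrightarrow> t \<in> taylor M \<Longrightarrow> \<exists>R. lsub R M \<and> r \<in> taylor R"
proof (induction arbitrary: M rule: rsub.induct)
  case (rsub_refl s) then show ?case using lsub_refl by blast
next
  case (rsub_app1 s s1 s2)
  then obtain P Q where "M = App P Q" "s1 \<in> taylor P" using taylor_RApp by blast
  then show ?case using rsub_app1.IH lsub_app1 by blast
next
  case (rsub_app2 s s2 s1)
  then obtain P Q where "M = App P Q" "s2 \<in> taylor Q" using taylor_RApp by blast
  then show ?case using rsub_app2.IH lsub_app2 by blast
next
  case (rsub_bag t b s)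
  then obtain N where "M = Lam N" "t \<in> taylor N" using taylor_Bag_lam by blast
  then show ?case using rsub_bag.IH lsub_lam by blast
qed

lemma up: "lsub R M \<Longrightarrow> r \<in> taylor R \<Longrightarrow> \<exists>t \<in> taylor M. rsub r t"
proof (induction rule: lsub.induct)
  case (lsub_refl M) then show ?case using rsub_refl by blast
next
  case (lsub_lam N M)
  then obtain t where t: "t \<in> taylor M" "rsub r t" by blast
  have "Bag (mset (map RLam [t])) \<in> taylor (Lam M)" using t by (intro lam_mem) auto
  moreover have "rsub r (Bag (mset (map RLam [t])))" by (rule rsub_bag[of t]) (use t in auto)
  ultimately show ?case by blast
next
  case (lsub_app1 N M P)
  then obtain t where t: "t \<in> taylor M" "rsub r t" by blast
  obtain u where "u \<in> taylor P" using taylor_nonempty by blast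
  then show ?case using t rsub_app1[of r t u] by auto
next
  case (lsub_app2 N P M)
  then obtain t where t: "t \<in> taylor P" "rsub r t" by blast
  obtain u where "u \<in> taylor M" using taylor_nonempty by blast
  then show ?case using t rsub_app2[of r t u] by auto
qed

lemma redex_down:
  assumes "r \<in> taylor R" "beta_r_redex r \<or> rsigma1_redex r \<or> rsigma3_redex r"
  shows "beta_v_redex R \<or> sigma1_redex R \<or> sigma3_redex R"
  using assms(2)
proof (elim disjE)
  assume "beta_r_redex r"
  then obtain t b where r: "r = RApp (Bag {#RLam t#}) (Bag b)" by (auto simp: beta_r_redex_def)
  then obtain P Q where "R = App P Q" "Bag {#RLam t#} \<in> taylor P" "Bag b \<in> taylor Q"
    using assms(1) taylor_RApp by blast
  moreover from this obtain N where "P = Lam N" using taylor_Bag_lam[of "{#RLam t#}" P t] by auto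
  ultimately show ?thesis using taylor_Bag_value by (auto simp: beta_v_redex_def)
next
  assume "rsigma1_redex r"
  then obtain t s1 s2 where r: "r = RApp (RApp (Bag {#RLam t#}) s1) s2" by (auto simp: rsigma1_redex_def)
  then obtain P Q where "R = App P Q" "RApp (Bag {#RLam t#}) s1 \<in> taylor P"
    using assms(1) taylor_RApp by blast
  moreover from this obtain P1 P2 where "P = App P1 P2" "Bag {#RLam t#} \<in> taylor P1"
    using taylor_RApp by blast
  moreover from this obtain N where "P1 = Lam N" using taylor_Bag_lam[of "{#RLam t#}" P1 t] by auto
  ultimately show ?thesis by (auto simp: sigma1_redex_def)
next
  assume "rsigma3_redex r"
  then obtain v t s where r: "r = RApp (Bag {#v#}) (RApp (Bag {#RLam t#}) s)" by (auto simp: rsigma3_redex_def)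
  then obtain P Q where "R = App P Q" "Bag {#v#} \<in> taylor P" "RApp (Bag {#RLam t#}) s \<in> taylor Q"
    using assms(1) taylor_RApp by blast
  moreover from this obtain Q1 Q2 where "Q = App Q1 Q2" "Bag {#RLam t#} \<in> taylor Q1"
    using taylor_RApp by blast
  moreover from this obtain N where "Q1 = Lam N" using taylor_Bag_lam[of "{#RLam t#}" Q1 t] by auto
  ultimately show ?thesis using taylor_Bag_value by (auto simp: sigma3_redex_def)
qed

lemma lam_single: "t \<in> taylor N \<Longrightarrow> Bag {#RLam t#} \<in> taylor (Lam N)"
proof -
  assume "t \<in> taylor N"
  then have "Bag (mset (map RLam [t])) \<in> taylor (Lam N)" by (intro lam_mem) auto
  then show ?thesis by simp
qed

lemma val_single: "is_value V \<Longrightarrow> \<exists>v. Bag {#v#} \<in> taylor V"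
proof (cases V)
  case (Var x)
  have "Bag (replicate_mset 1 (RVar x)) \<in> taylor V" using Var var_mem[of 1 x] by (simp del: taylor.simps)
  then show ?thesis by auto
next
  case (Lam N)
  obtain t where "t \<in> taylor N" using taylor_nonempty by blast
  then show ?thesis using Lam lam_single by blast
qed auto

lemma val_bag: "is_value V \<Longrightarrow> \<exists>b. Bag b \<in> taylor V"
  using val_single by blast

lemma redex_up:
  assumes "beta_v_redex R \<or> sigma1_redex R \<or> sigma3_redex R"
  shows "\<exists>r \<in> taylor R. beta_r_redex r \<or> rsigma1_redex r \<or> rsigma3_redex r"
  using assms
proof (elim disjE)
  assume "beta_v_redex R"
  then obtain M V where R: "R = App (Lam M) V" "is_value V" by (auto simp: beta_v_redex_def)
  obtain t where t: "t \<in> taylor M" using taylor_nonempty by blast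
  obtain b where "Bag b \<in> taylor V" using val_bag R by blast
  then have "RApp (Bag {#RLam t#}) (Bag b) \<in> taylor R" using R t lam_single by auto
  then show ?thesis by (auto simp: beta_r_redex_def)
next
  assume "sigma1_redex R"
  then obtain M N P where R: "R = App (App (Lam M) N) P" by (auto simp: sigma1_redex_def)
  obtain t where t: "t \<in> taylor M" using taylor_nonempty by blast
  obtain s1 where s1: "s1 \<in> taylor N" using taylor_nonempty by blast
  obtain s2 where s2: "s2 \<in> taylor P" using taylor_nonempty by blast
  have "RApp (RApp (Bag {#RLam t#}) s1) s2 \<in> taylor R" using R t s1 s2 lam_single by auto
  then show ?thesis by (auto simp: rsigma1_redex_def)
next
  assume "sigma3_redex R"
  then obtain V M N where R: "R = App V (App (Lam M) N)" "is_value V" by (auto simp: sigma3_redex_def)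
  obtain t where t: "t \<in> taylor M" using taylor_nonempty by blast
  obtain s where s: "s \<in> taylor N" using taylor_nonempty by blast
  obtain v where v: "Bag {#v#} \<in> taylor V" using val_single R by blast
  have "RApp (Bag {#v#}) (RApp (Bag {#RLam t#}) s) \<in> taylor R" using R t s v lam_single by auto
  then show ?thesis by (auto simp: rsigma3_redex_def)
qed

theorem lemma3p13:
  fixes M :: lterm
  shows "v_normal M \<longleftrightarrow> (\<forall>t \<in> taylor M. beta_r_sigma_normal t)"
proof
  assume vn: "v_normal M"
  show "\<forall>t \<in> taylor M. beta_r_sigma_normal t"
  proof (intro ballI)
    fix t assume t: "t \<in> taylor M"
    show "beta_r_sigma_normal t" unfolding beta_r_sigma_normal_def
    proof (intro allI impI)
      fix r assume "rsub r t"
      then obtain R where "lsub R M" "r \<in> taylor R" using down t by blast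
      then show "\<not> beta_r_redex r \<and> \<not> rsigma1_redex r \<and> \<not> rsigma3_redex r"
        using vn redex_down unfolding v_normal_def by blast
    qed
  qed
next
  assume H: "\<forall>t \<in> taylor M. beta_r_sigma_normal t"
  show "v_normal M" unfolding v_normal_def
  proof (intro allI impI)
    fix R assume sub: "lsub R M"
    show "\<not> beta_v_redex R \<and> \<not> sigma1_redex R \<and> \<not> sigma3_redex R"
    proof (rule ccontr)
      assume "\<not> ?thesis"
      then obtain r where r: "r \<in> taylor R" "beta_r_redex r \<or> rsigma1_redex r \<or> rsigma3_redex r"
        using redex_up by blast
      then obtain t where "t \<in> taylor M" "rsub r t" using up sub by blast
      then show False using H r unfolding beta_r_sigma_normal_def by blast
    qed
  qed
qed

end
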